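(* Let $\mathcal A$ (analysis units, $|\mathcal A|=n_a$) and $\mathcal R$ (randomization units, $|\mathcal R|=n_r$) be finite sets, let $\mathbf T=(T_r)_{r\in\mathcal R}$ be the random treatment vector, and let $E_{ar}:\{0,1\}^{n_r}\to\{0,1\}$, $e_{ar}=E_{ar}(\mathbf T)$, $w_{ar}$, $\alpha_a,\beta_a$, $x_a$, $y_a$, $\mu$, $\mathcal W_a(\mathbf 1)$, $z^u_a$, $\hat\beta^u_a$, $\widehat{\mathcal W_a(\mathbf 1)}^c$ be as in the context. Suppose $G\subset\mathcal A\times\mathcal R$ is a known anchor subgraph. Assume: (a) edges are $r$-driven; (b) the treatment assignments $T_r$, $r\in\mathcal R$, are independent Bernoulli random variables with success probability $p\in(0,1)$; (c) $\{(a,r)\mid u_{ar}\neq 0\}\subset G$; (d) $c_{ar}=\mathbb I((a,r)\in G)$ for all $(a,r)$; (e) $w_{ar}\neq 0$ for all $(a,r)\in G$; and (f) $|\{r\mid u_{ar}\neq 0\}|>0$ for all $a\in\mathcal A$. Then $$\hat\mu^{u,c}=\frac1{n_a}\sum_{a\in\mathcal A}\hat\beta^u_a\cdot\widehat{\mathcal W_a(\mathbf 1)}^c$$ is an unbiased estimator of the total treatment effect $\mu$, i.e.\ $\mathbb E[\hat\mu^{u,c}]=\mu$.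
   Context: Setting (endogenous bipartite interference graph). $\mathcal A$ is a set of $n_a$ analysis units, $\mathcal R$ a set of $n_r$ randomization units. A random treatment vector $\mathbf T=(T_r)_{r\in\mathcal R}\in\{0,1\}^{n_r}$ is assigned; all randomness comes from $\mathbf T$. For each $(a,r)\in\mathcal A\times\mathcal R$ there is an (unknown) edge potential outcome function $E_{ar}:\{0,1\}^{n_r}\to\{0,1\}$; its realization $e_{ar}=E_{ar}(\mathbf T)$ is observed. Edges are called $r$-driven if for every $(a,r)$, $E_{ar}(\mathbf T)$ depends on $\mathbf T$ only through $T_r$; then $e_{ar}(1)$ denotes the value of $E_{ar}$ when $T_r=1$ (so $e_{ar}(1)=E_{ar}(\mathbf 1)$). An anchor subgraph is a set $G\subset\mathcal A\times\mathcal R$ such that $E_{ar}(\mathbf T)=1$ for every $\mathbf T\in\{0,1\}^{n_r}$ and every $(a,r)\in G$. Outcome model: given known real weights $w_{ar}$, the potential outcome of analysis unit $a$ is $Y_a(\mathbf T)=\alpha_a+\beta_a x_a$ where $x_a=\sum_r T_r E_{ar}(\mathbf T)w_{ar}$ and $\alpha_a,\beta_a$ are unknown fixed constants; the realized outcome is $y_a=Y_a(\mathbf T)$. The total treatment effect (TTE) is $\mu=\frac1{n_a}\sum_a[Y_a(\mathbf 1)-Y_a(\mathbf 0)]=\frac1{n_a}\sum_a\mathcal W_a(\mathbf 1)\beta_a$, where $\mathcal W_a(\mathbf 1)=\sum_r w_{ar}E_{ar}(\mathbf 1)$ and $\mathbf 1,\mathbf 0$ are the all-treated and all-control vectors. Estimators: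 for fixed researcher-chosen real weights $u_{ar}$ and $c_{ar}$, let $z^u_a=\sum_r T_r u_{ar}$, $\hat\beta^u_a=y_a\,(z^u_a-\mathbb E z^u_a)/\mathrm{Cov}(x_a,z^u_a)$, and $\widehat{\mathcal W_a(\mathbf 1)}^c=\sum_r\left[\frac{T_r w_{ar}(e_{ar}-c_{ar})}{p}+w_{ar}c_{ar}\right]$, where $p$ is the treatment probability.
   Formalization: The covariance $\mathrm{Cov}(x_a,z^u_a)$ is also assumed to be nonzero for every analysis unit $a\in\mathcal A$. The statement above fails without it. *)

theory Defs
  imports "HOL-Probability.Probability"
begin

text \<open>Treatment vectors are functions 'r => bool (T r = True means T_r = 1).
  The design: independent Bernoulli(p) treatments on the randomization units R
  (coordinates outside R are fixed to False).\<close>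

definition treat_pmf :: "'r set \<Rightarrow> real \<Rightarrow> ('r \<Rightarrow> bool) pmf" where
  "treat_pmf R p = Pi_pmf R False (\<lambda>_. bernoulli_pmf p)"

definition Ex :: "'r set \<Rightarrow> real \<Rightarrow> (('r \<Rightarrow> bool) \<Rightarrow> real) \<Rightarrow> real" where
  "Ex R p f = measure_pmf.expectation (treat_pmf R p) f"

definition Cov :: "'r set \<Rightarrow> real \<Rightarrow> (('r \<Rightarrow> bool) \<Rightarrow> real) \<Rightarrow> (('r \<Rightarrow> bool) \<Rightarrow> real) \<Rightarrow> real" where
  "Cov R p f g = Ex R p (\<lambda>T. (f T - Ex R p f) * (g T - Ex R p g))"

definition r_driven :: "'a set \<Rightarrow> 'r set \<Rightarrow> ('a \<Rightarrow> 'r \<Rightarrow> ('r \<Rightarrow> bool) \<Rightarrow> bool) \<Rightarrow> bool" where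
  "r_driven A R E \<longleftrightarrow> (\<forall>a\<in>A. \<forall>r\<in>R. \<forall>T T'. T r = T' r \<longrightarrow> E a r T = E a r T')"

definition anchor_subgraph :: "'a set \<Rightarrow> 'r set \<Rightarrow> ('a \<Rightarrow> 'r \<Rightarrow> ('r \<Rightarrow> bool) \<Rightarrow> bool) \<Rightarrow> ('a \<times> 'r) set \<Rightarrow> bool" where
  "anchor_subgraph A R E G \<longleftrightarrow> G \<subseteq> A \<times> R \<and> (\<forall>(a, r)\<in>G. \<forall>T. E a r T)"

definition xa :: "'r set \<Rightarrow> ('a \<Rightarrow> 'r \<Rightarrow> ('r \<Rightarrow> bool) \<Rightarrow> bool) \<Rightarrow> ('a \<Rightarrow> 'r \<Rightarrow> real) \<Rightarrow> 'a \<Rightarrow> ('r \<Rightarrow> bool) \<Rightarrow> real" where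
  "xa R E w a T = (\<Sum>r\<in>R. of_bool (T r) * of_bool (E a r T) * w a r)"

definition Yout :: "'r set \<Rightarrow> ('a \<Rightarrow> 'r \<Rightarrow> ('r \<Rightarrow> bool) \<Rightarrow> bool) \<Rightarrow> ('a \<Rightarrow> 'r \<Rightarrow> real)
    \<Rightarrow> ('a \<Rightarrow> real) \<Rightarrow> ('a \<Rightarrow> real) \<Rightarrow> 'a \<Rightarrow> ('r \<Rightarrow> bool) \<Rightarrow> real" where
  "Yout R E w \<alpha> \<beta> a T = \<alpha> a + \<beta> a * xa R E w a T"

definition TTE :: "'a set \<Rightarrow> 'r set \<Rightarrow> ('a \<Rightarrow> 'r \<Rightarrow> ('r \<Rightarrow> bool) \<Rightarrow> bool) \<Rightarrow> ('a \<Rightarrow> 'r \<Rightarrow> real)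
    \<Rightarrow> ('a \<Rightarrow> real) \<Rightarrow> ('a \<Rightarrow> real) \<Rightarrow> real" where
  "TTE A R E w \<alpha> \<beta> = (1 / real (card A)) *
     (\<Sum>a\<in>A. Yout R E w \<alpha> \<beta> a (\<lambda>_. True) - Yout R E w \<alpha> \<beta> a (\<lambda>_. False))"

definition zu :: "'r set \<Rightarrow> ('a \<Rightarrow> 'r \<Rightarrow> real) \<Rightarrow> 'a \<Rightarrow> ('r \<Rightarrow> bool) \<Rightarrow> real" where
  "zu R u a T = (\<Sum>r\<in>R. of_bool (T r) * u a r)"

definition beta_hat :: "'r set \<Rightarrow> real \<Rightarrow> ('a \<Rightarrow> 'r \<Rightarrow> ('r \<Rightarrow> bool) \<Rightarrow> bool) \<Rightarrow> ('a \<Rightarrow> 'r \<Rightarrow> real)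
    \<Rightarrow> ('a \<Rightarrow> real) \<Rightarrow> ('a \<Rightarrow> real) \<Rightarrow> ('a \<Rightarrow> 'r \<Rightarrow> real) \<Rightarrow> 'a \<Rightarrow> ('r \<Rightarrow> bool) \<Rightarrow> real" where
  "beta_hat R p E w \<alpha> \<beta> u a T =
     Yout R E w \<alpha> \<beta> a T * (zu R u a T - Ex R p (zu R u a)) / Cov R p (xa R E w a) (zu R u a)"

definition W_hat :: "'r set \<Rightarrow> real \<Rightarrow> ('a \<Rightarrow> 'r \<Rightarrow> ('r \<Rightarrow> bool) \<Rightarrow> bool) \<Rightarrow> ('a \<Rightarrow> 'r \<Rightarrow> real)
    \<Rightarrow> ('a \<Rightarrow> 'r \<Rightarrow> real) \<Rightarrow> 'a \<Rightarrow> ('r \<Rightarrow> bool) \<Rightarrow> real" where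
  "W_hat R p E w c a T =
     (\<Sum>r\<in>R. of_bool (T r) * w a r * (of_bool (E a r T) - c a r) / p + w a r * c a r)"

definition mu_hat :: "'a set \<Rightarrow> 'r set \<Rightarrow> real \<Rightarrow> ('a \<Rightarrow> 'r \<Rightarrow> ('r \<Rightarrow> bool) \<Rightarrow> bool) \<Rightarrow> ('a \<Rightarrow> 'r \<Rightarrow> real)
    \<Rightarrow> ('a \<Rightarrow> real) \<Rightarrow> ('a \<Rightarrow> real) \<Rightarrow> ('a \<Rightarrow> 'r \<Rightarrow> real) \<Rightarrow> ('a \<Rightarrow> 'r \<Rightarrow> real)
    \<Rightarrow> ('r \<Rightarrow> bool) \<Rightarrow> real" where
  "mu_hat A R p E w \<alpha> \<beta> u c T = (1 / real (card A)) *
     (\<Sum>a\<in>A. beta_hat R p E w \<alpha> \<beta> u a T * W_hat R p E w c a T)"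

end

theory Submission
  imports Defs
begin

lemma fin_treat: "finite R \<Longrightarrow> finite (set_pmf (treat_pmf R p))"
  unfolding treat_pmf_def
  by (subst set_Pi_pmf) (auto intro!: finite_PiE_dflt)

lemma integ_treat: "finite R \<Longrightarrow> integrable (measure_pmf (treat_pmf R p)) (f :: _ \<Rightarrow> real)"
  by (rule integrable_measure_pmf_finite[OF fin_treat])

lemma Ex_add: "finite R \<Longrightarrow> Ex R p (\<lambda>T. f T + g T) = Ex R p f + Ex R p g"
  unfolding Ex_def by (rule Bochner_Integration.integral_add; rule integ_treat)
lemma Ex_diff: "finite R \<Longrightarrow> Ex R p (\<lambda>T. f T - g T) = Ex R p f - Ex R p g"
  unfolding Ex_def by (rule Bochner_Integration.integral_diff; rule integ_treat)
lemma Ex_sum: "finite R \<Longrightarrow> Ex R p (\<lambda>T. \<Sum>i\<in>I. f i T) = (\<Sum>i\<in>I. Ex R p (f i))"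
  unfolding Ex_def by (rule Bochner_Integration.integral_sum; rule integ_treat)
lemma Ex_cmult: "Ex R p (\<lambda>T. c * f T) = c * Ex R p f"
  unfolding Ex_def by simp
lemma Ex_multc: "Ex R p (\<lambda>T. f T * c) = Ex R p f * c"
  unfolding Ex_def by simp
lemma Ex_const: "Ex R p (\<lambda>T. c) = c"
  unfolding Ex_def by simp

lemma Ex_split:
  assumes fin: "finite R" and r: "r \<in> R" and p: "0 \<le> p" "p \<le> 1"
  shows "Ex R p h = p * Ex (R - {r}) p (\<lambda>F. h (F(r := True)))
                  + (1 - p) * Ex (R - {r}) p (\<lambda>F. h (F(r := False)))"
proof -
  let ?M = "treat_pmf (R - {r}) p"
  define S where "S = set_pmf ?M"
  have finS: "finite S" unfolding S_def using fin by (simp add: fin_treat)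
  have RR: "R = insert r (R - {r})" using r by auto
  have "treat_pmf R p = map_pmf (\<lambda>(y,f). f(r:=y)) (pair_pmf (bernoulli_pmf p) ?M)"
    unfolding treat_pmf_def by (subst RR, subst Pi_pmf_insert) (use fin in auto)
  hence "Ex R p h = measure_pmf.expectation (pair_pmf (bernoulli_pmf p) ?M) (\<lambda>(y,f). h (f(r:=y)))"
    unfolding Ex_def by (simp add: case_prod_unfold)
  also have "\<dots> = (\<Sum>x\<in>UNIV \<times> S. (\<lambda>(y,f). h (f(r:=y))) x * pmf (pair_pmf (bernoulli_pmf p) ?M) x)"
    by (rule integral_measure_pmf_real) (use finS in \<open>auto simp: S_def\<close>)
  also have "\<dots> = (\<Sum>y\<in>UNIV. \<Sum>F\<in>S. h (F(r:=y)) * (pmf (bernoulli_pmf p) y * pmf ?M F))"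
    apply (simp add: sum.cartesian_product case_prod_unfold)
    apply (rule sum.cong, rule refl)
    apply (metis pmf_pair prod.collapse)
    done
  also have "\<dots> = p * (\<Sum>F\<in>S. h (F(r:=True)) * pmf ?M F) + (1 - p) * (\<Sum>F\<in>S. h (F(r:=False)) * pmf ?M F)"
    using p by (simp add: UNIV_bool sum_distrib_left algebra_simps)
  also have "(\<Sum>F\<in>S. h (F(r:=True)) * pmf ?M F) = Ex (R - {r}) p (\<lambda>F. h (F(r := True)))"
    unfolding Ex_def by (rule integral_measure_pmf_real[symmetric]) (use finS in \<open>auto simp: S_def\<close>)
  also have "(\<Sum>F\<in>S. h (F(r:=False)) * pmf ?M F) = Ex (R - {r}) p (\<lambda>F. h (F(r := False)))"
    unfolding Ex_def by (rule integral_measure_pmf_real[symmetric]) (use finS in \<open>auto simp: S_def\<close>)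
  finally show ?thesis .
qed

definition indep_of :: "'r \<Rightarrow> (('r \<Rightarrow> bool) \<Rightarrow> real) \<Rightarrow> bool" where
  "indep_of r g \<longleftrightarrow> (\<forall>T b. g (T(r := b)) = g T)"

lemma Ex_indep:
  assumes "finite R" "r \<in> R" "0 \<le> p" "p \<le> 1" "indep_of r g"
  shows "Ex R p g = Ex (R - {r}) p g"
  using Ex_split[OF assms(1-4), of g] assms(5) by (simp add: indep_of_def algebra_simps)

lemma Ex_key:
  assumes fin: "finite R" and r: "r \<in> R" and p: "0 \<le> p" "p \<le> 1"
    and k: "indep_of r k" and g: "indep_of r g"
  shows "Ex R p (\<lambda>T. (of_bool (T r) - p) * (k T * of_bool (T r) + g T)) = p * (1 - p) * Ex R p k"
proof -
  let ?h = "\<lambda>T. (of_bool (T r) - p) * (k T * of_bool (T r) + g T)"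
  have 1: "(\<lambda>F. ?h (F(r := True))) = (\<lambda>F. (1 - p) * k F + (1 - p) * g F)"
    using k g by (auto simp: indep_of_def algebra_simps)
  have 2: "(\<lambda>F. ?h (F(r := False))) = (\<lambda>F. (- p) * g F)"
    using k g by (auto simp: indep_of_def algebra_simps)
  have fin': "finite (R - {r})" using fin by simp
  have "Ex R p ?h = p * Ex (R - {r}) p (\<lambda>F. (1 - p) * k F + (1 - p) * g F)
      + (1 - p) * Ex (R - {r}) p (\<lambda>F. (- p) * g F)"
    using Ex_split[OF fin r p, of ?h] unfolding 1 2 .
  also have "\<dots> = p * (1 - p) * Ex (R - {r}) p k"
    by (simp only: Ex_add[OF fin'] Ex_cmult) (simp add: algebra_simps)
  also have "\<dots> = p * (1 - p) * Ex R p k" using Ex_indep[OF fin r p k] by simp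
  finally show ?thesis .
qed

lemma Ex_Tr:
  assumes fin: "finite R" and r: "r \<in> R" and p: "0 \<le> p" "p \<le> 1"
  shows "Ex R p (\<lambda>T. of_bool (T r)) = p"
  using Ex_split[OF fin r p, of "\<lambda>T. of_bool (T r)"] by (simp add: Ex_const)


lemma indep_sum_minus: "indep_of r (\<lambda>T. (\<Sum>s\<in>R - {r}. of_bool (T s) * f s) + c)"
  unfolding indep_of_def by (auto intro!: sum.cong)

lemma per_a:
  assumes finR: "finite R" and aA: "a \<in> A"
    and anchor: "anchor_subgraph A R E G"
    and rdriven: "r_driven A R E"
    and p: "0 < p" "p < 1"
    and u_supp: "\<forall>a\<in>A. \<forall>r\<in>R. u a r \<noteq> 0 \<longrightarrow> (a, r) \<in> G"
    and c_def: "\<forall>a\<in>A. \<forall>r\<in>R. c a r = (if (a, r) \<in> G then 1 else 0)"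
    and cov_nz: "Cov R p (xa R E w a) (zu R u a) \<noteq> 0"
  shows "Ex R p (\<lambda>T. beta_hat R p E w \<alpha> \<beta> u a T * W_hat R p E w c a T)
       = \<beta> a * (\<Sum>r\<in>R. of_bool (E a r (\<lambda>_. True)) * w a r)"
proof -
  have p0: "0 \<le> p" "p \<le> 1" using p by auto
  define e1 where "e1 r = E a r (\<lambda>_. True)" for r
  define v where "v r = of_bool (e1 r) * w a r" for r
  define q where "q r = (if (a, r) \<in> G then 0 else v r / p)" for r
  define K where "K = (\<Sum>r\<in>R. if (a, r) \<in> G then w a r else 0)"
  define Wf where "Wf T = K + (\<Sum>s\<in>R. of_bool (T s) * q s)" for T
  have Eeq: "E a r T = e1 r" if "r \<in> R" "T r" for r T
    using rdriven aA that unfolding r_driven_def e1_def by (metis (full_types))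
  have Ganch: "E a r T" if "(a, r) \<in> G" for r T
    using anchor that unfolding anchor_subgraph_def by auto
  have x_eq: "xa R E w a T = (\<Sum>r\<in>R. of_bool (T r) * v r)" for T
    unfolding xa_def v_def by (intro sum.cong refl) (auto simp: Eeq)
  have W_eq: "W_hat R p E w c a T = Wf T" for T
  proof -
    have "W_hat R p E w c a T = (\<Sum>r\<in>R. (if (a, r) \<in> G then w a r else 0) + of_bool (T r) * q r)"
      unfolding W_hat_def
    proof (intro sum.cong refl)
      fix r assume r: "r \<in> R"
      show "of_bool (T r) * w a r * (of_bool (E a r T) - c a r) / p + w a r * c a r =
          (if (a, r) \<in> G then w a r else 0) + of_bool (T r) * q r"
        using c_def aA r Ganch[of r T] Eeq[OF r] by (auto simp: q_def v_def)
    qed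
    thus ?thesis unfolding Wf_def K_def by (simp add: sum.distrib)
  qed
  have ExW: "Ex R p Wf = (\<Sum>r\<in>R. v r)"
  proof -
    have "Ex R p Wf = K + (\<Sum>s\<in>R. p * q s)"
      unfolding Wf_def
      by (simp only: Ex_add[OF finR] Ex_const Ex_sum[OF finR] Ex_multc)
         (intro arg_cong[where f="(+) K"] sum.cong refl, simp add: Ex_Tr[OF finR _ p0])
    also have "\<dots> = (\<Sum>r\<in>R. v r)"
      unfolding K_def sum.distrib[symmetric]
      by (intro sum.cong refl) (use p Ganch in \<open>auto simp: q_def v_def e1_def\<close>)
    finally show ?thesis .
  qed
  have Ez: "Ex R p (zu R u a) = (\<Sum>r\<in>R. u a r * p)"
    unfolding zu_def
    by (simp only: Ex_sum[OF finR] Ex_multc) (intro sum.cong refl, simp add: Ex_Tr[OF finR _ p0] mult.commute)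
  have z_eq: "zu R u a T - Ex R p (zu R u a) = (\<Sum>r\<in>R. u a r * (of_bool (T r) - p))" for T
    unfolding Ez unfolding zu_def by (simp add: sum_subtractf[symmetric] right_diff_distrib mult.commute)
  have Ex_x: "Ex R p (xa R E w a) = (\<Sum>r\<in>R. v r * p)"
    unfolding x_eq
    by (simp only: Ex_sum[OF finR] Ex_multc) (intro sum.cong refl, simp add: Ex_Tr[OF finR _ p0] mult.commute)
  have x_split: "xa R E w a T = of_bool (T r) * v r + (\<Sum>s\<in>R - {r}. of_bool (T s) * v s)"
    if "r \<in> R" for r T
    unfolding x_eq by (rule sum.remove[OF finR that])
  have cov: "Cov R p (xa R E w a) (zu R u a) = p * (1 - p) * (\<Sum>r\<in>R. u a r * v r)"
  proof -
    have "Cov R p (xa R E w a) (zu R u a) =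
        Ex R p (\<lambda>T. \<Sum>r\<in>R. u a r * ((of_bool (T r) - p) * (xa R E w a T - Ex R p (xa R E w a))))"
      unfolding Cov_def z_eq by (simp add: sum_distrib_right mult_ac)
    also have "\<dots> = (\<Sum>r\<in>R. u a r * Ex R p (\<lambda>T. (of_bool (T r) - p) * (xa R E w a T - Ex R p (xa R E w a))))"
      by (simp add: Ex_sum finR Ex_cmult)
    also have "\<dots> = (\<Sum>r\<in>R. u a r * (p * (1 - p) * v r))"
    proof (intro sum.cong refl)
      fix r assume r: "r \<in> R"
      have "Ex R p (\<lambda>T. (of_bool (T r) - p) * (xa R E w a T - Ex R p (xa R E w a)))
          = Ex R p (\<lambda>T. (of_bool (T r) - p) * ((\<lambda>_. v r) T * of_bool (T r) +
              ((\<Sum>s\<in>R - {r}. of_bool (T s) * v s) + (- Ex R p (xa R E w a)))))"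
        using x_split[OF r] by (simp add: mult_ac add_diff_eq)
      also have "\<dots> = p * (1 - p) * Ex R p (\<lambda>_. v r)"
        by (rule Ex_key[OF finR r p0]) (auto simp: indep_of_def intro!: sum.cong)
      finally show "u a r * Ex R p (\<lambda>T. (of_bool (T r) - p) * (xa R E w a T - Ex R p (xa R E w a)))
          = u a r * (p * (1 - p) * v r)" by (simp add: Ex_const)
    qed
    finally show ?thesis by (simp add: sum_distrib_left mult_ac)
  qed
  define C where "C = Cov R p (xa R E w a) (zu R u a)"
  have "Ex R p (\<lambda>T. beta_hat R p E w \<alpha> \<beta> u a T * W_hat R p E w c a T)
      = Ex R p (\<lambda>T. (\<Sum>r\<in>R. u a r * ((of_bool (T r) - p) * (Yout R E w \<alpha> \<beta> a T * Wf T))) * (1 / C))"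
  proof -
    have "(\<Sum>r\<in>R. u a r * ((of_bool (T r) - p) * (Yout R E w \<alpha> \<beta> a T * Wf T)))
       = (\<Sum>r\<in>R. u a r * (of_bool (T r) - p)) * (Yout R E w \<alpha> \<beta> a T * Wf T)" for T
      by (simp only: sum_distrib_right) (simp add: mult_ac)
    thus ?thesis unfolding beta_hat_def W_eq z_eq C_def by (simp add: mult_ac)
  qed
  also have "\<dots> = (\<Sum>r\<in>R. u a r * Ex R p (\<lambda>T. (of_bool (T r) - p) * (Yout R E w \<alpha> \<beta> a T * Wf T))) * (1 / C)"
    by (simp only: Ex_multc Ex_sum[OF finR] Ex_cmult)
  also have "(\<Sum>r\<in>R. u a r * Ex R p (\<lambda>T. (of_bool (T r) - p) * (Yout R E w \<alpha> \<beta> a T * Wf T)))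
      = (\<Sum>r\<in>R. u a r * (p * (1 - p) * (\<beta> a * v r * (\<Sum>r\<in>R. v r))))"
  proof (intro sum.cong refl)
    fix r assume r: "r \<in> R"
    show "u a r * Ex R p (\<lambda>T. (of_bool (T r) - p) * (Yout R E w \<alpha> \<beta> a T * Wf T))
        = u a r * (p * (1 - p) * (\<beta> a * v r * (\<Sum>r\<in>R. v r)))"
    proof (cases "u a r = 0")
      case False
      hence G: "(a, r) \<in> G" using u_supp aA r by auto
      have Wind: "indep_of r Wf"
        unfolding indep_of_def Wf_def using G by (auto simp: q_def intro!: sum.cong)
      have "Ex R p (\<lambda>T. (of_bool (T r) - p) * (Yout R E w \<alpha> \<beta> a T * Wf T))
        = Ex R p (\<lambda>T. (of_bool (T r) - p) * ((\<lambda>T. \<beta> a * v r * Wf T) T * of_bool (T r)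
            + (\<lambda>T. (\<alpha> a + \<beta> a * (\<Sum>s\<in>R - {r}. of_bool (T s) * v s)) * Wf T) T))"
        unfolding Yout_def using x_split[OF r] by (simp add: distrib_left distrib_right mult_ac add_ac)
      also have "\<dots> = p * (1 - p) * Ex R p (\<lambda>T. \<beta> a * v r * Wf T)"
      proof (rule Ex_key[OF finR r p0])
        show "indep_of r (\<lambda>T. \<beta> a * v r * Wf T)" using Wind by (simp add: indep_of_def)
        show "indep_of r (\<lambda>T. (\<alpha> a + \<beta> a * (\<Sum>s\<in>R - {r}. of_bool (T s) * v s)) * Wf T)"
          using Wind by (auto simp: indep_of_def intro!: sum.cong)
      qed
      also have "\<dots> = p * (1 - p) * (\<beta> a * v r * (\<Sum>r\<in>R. v r))"
        by (simp add: Ex_cmult ExW)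
      finally show ?thesis by simp
    qed simp
  qed
  also have "(\<Sum>r\<in>R. u a r * (p * (1 - p) * (\<beta> a * v r * (\<Sum>r\<in>R. v r))))
      = C * (\<beta> a * (\<Sum>r\<in>R. v r))"
    unfolding C_def cov by (simp add: sum_distrib_left sum_distrib_right mult_ac)
  finally show ?thesis using cov_nz unfolding C_def v_def e1_def by simp
qed

theorem theorem1:
  fixes A :: "'a set" and R :: "'r set" and p :: real
    and E :: "'a \<Rightarrow> 'r \<Rightarrow> ('r \<Rightarrow> bool) \<Rightarrow> bool"
    and w u c :: "'a \<Rightarrow> 'r \<Rightarrow> real" and \<alpha> \<beta> :: "'a \<Rightarrow> real"
    and G :: "('a \<times> 'r) set"
  assumes finA: "finite A" and finR: "finite R"
    and anchor: "anchor_subgraph A R E G"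
    and rdriven: "r_driven A R E"
    and p: "0 < p" "p < 1"
    and u_supp: "\<forall>a\<in>A. \<forall>r\<in>R. u a r \<noteq> 0 \<longrightarrow> (a, r) \<in> G"
    and c_def: "\<forall>a\<in>A. \<forall>r\<in>R. c a r = (if (a, r) \<in> G then 1 else 0)"
    and w_nz: "\<forall>(a, r)\<in>G. w a r \<noteq> 0"
    and u_nonempty: "\<forall>a\<in>A. card {r\<in>R. u a r \<noteq> 0} > 0"
    and cov_nz: "\<forall>a\<in>A. Cov R p (xa R E w a) (zu R u a) \<noteq> 0"
  shows "Ex R p (mu_hat A R p E w \<alpha> \<beta> u c) = TTE A R E w \<alpha> \<beta>"
proof -
  have "Ex R p (mu_hat A R p E w \<alpha> \<beta> u c) =
      (1 / real (card A)) * (\<Sum>a\<in>A. Ex R p (\<lambda>T. beta_hat R p E w \<alpha> \<beta> u a T * W_hat R p E w c a T))"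
    unfolding mu_hat_def by (simp only: Ex_cmult Ex_sum[OF finR])
  also have "\<dots> = (1 / real (card A)) * (\<Sum>a\<in>A. \<beta> a * (\<Sum>r\<in>R. of_bool (E a r (\<lambda>_. True)) * w a r))"
    by (intro arg_cong[where f="(*) _"] sum.cong refl per_a[OF finR _ anchor rdriven p u_supp c_def])
       (use cov_nz in auto)
  also have "\<dots> = TTE A R E w \<alpha> \<beta>"
    unfolding TTE_def Yout_def xa_def by (simp add: mult.commute)
  finally show ?thesis .
qed

end
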